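(* Let $C\subseteq GF(2)^n$ be an affine subspace such that every vector of $C$ has weight exactly $k$. Then $|C|\le 2^{(n-|n-2k|)/2}$.
   Context: The weight of $x\in GF(2)^n$ is the number of its nonzero coordinates. *)

theory Defs
  imports Complex_Main "HOL-Library.Z2"
begin

text \<open>Vectors of GF(2)^n are represented as functions nat => bit (bit = GF(2))
  vanishing outside the coordinates 0..n-1.\<close>

definition gf2vec :: "nat \<Rightarrow> (nat \<Rightarrow> bit) set" where
  "gf2vec n = {x. \<forall>i\<ge>n. x i = 0}"

definition weight :: "nat \<Rightarrow> (nat \<Rightarrow> bit) \<Rightarrow> nat" where
  "weight n x = card {i. i < n \<and> x i \<noteq> 0}"

definition gf2_subspace :: "nat \<Rightarrow> (nat \<Rightarrow> bit) set \<Rightarrow> bool" where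
  "gf2_subspace n V \<longleftrightarrow> V \<subseteq> gf2vec n \<and> (\<lambda>_. 0) \<in> V \<and>
     (\<forall>x\<in>V. \<forall>y\<in>V. (\<lambda>i. x i + y i) \<in> V) \<and> (\<forall>c::bit. \<forall>x\<in>V. (\<lambda>i. c * x i) \<in> V)"

definition gf2_affine :: "nat \<Rightarrow> (nat \<Rightarrow> bit) set \<Rightarrow> bool" where
  "gf2_affine n C \<longleftrightarrow> (\<exists>a V. a \<in> gf2vec n \<and> gf2_subspace n V \<and> C = (\<lambda>v. (\<lambda>i. a i + v i)) ` V)"

end

theory Submission
  imports Defs "HOL-Library.FuncSet"
begin

lemma bit_add_eq0: "(a::bit) + b = 0 \<longleftrightarrow> a = b"
  by (cases a; cases b) simp_all

lemma bit_add0: "(a::bit) + 0 = a" "0 + (a::bit) = a"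
  by simp_all

lemma bit_cancel: "(a::bit) + x = a + y \<Longrightarrow> x = y"
  by (cases a; cases x; cases y) simp_all

lemma bit_univ: "(UNIV::bit set) = {0,1}"
  using bit.exhaust by blast

lemma card_restr: "finite S \<Longrightarrow> card (S \<rightarrow>\<^sub>E (UNIV::bit set)) = 2 ^ card S"
  by (simp add: card_PiE bit_univ numeral_2_eq_2)

lemma key1:
  assumes sub: "gf2_subspace n V" and a: "a \<in> gf2vec n"
    and w: "\<forall>v\<in>V. weight n (\<lambda>i. a i + v i) = k"
  shows "card V \<le> 2 ^ k"
proof -
  define S where "S = {i. i < n \<and> a i \<noteq> 0}"
  have finS: "finite S" unfolding S_def by simp
  have "(\<lambda>_. 0) \<in> V" using sub unfolding gf2_subspace_def by blast
  hence cS: "card S = k" using w unfolding S_def weight_def by force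
  have inj: "inj_on (\<lambda>v. restrict v S) V"
  proof (rule inj_onI, rule ccontr)
    fix v w' assume v: "v \<in> V" and wV: "w' \<in> V" and eq: "restrict v S = restrict w' S" and ne: "v \<noteq> w'"
    define u where "u = (\<lambda>i. v i + w' i)"
    have uV: "u \<in> V" using sub v wV unfolding gf2_subspace_def u_def by blast
    from ne obtain i where i: "v i \<noteq> w' i" by blast
    have "v \<in> gf2vec n" "w' \<in> gf2vec n" using sub v wV unfolding gf2_subspace_def by blast+
    hence iln: "i < n" using i unfolding gf2vec_def by (metis (mono_tags, lifting) mem_Collect_eq not_le)
    have uS: "\<forall>j\<in>S. u j = 0" using eq unfolding u_def restrict_def
      by (metis bit_add_eq0)
    have iS: "i \<notin> S" using eq i unfolding restrict_def by metis
    have ui: "u i \<noteq> 0" using i unfolding u_def bit_add_eq0 .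
    have ai: "a i = 0" using iS iln unfolding S_def by simp
    have sub2: "insert i S \<subseteq> {j. j < n \<and> a j + u j \<noteq> 0}"
      using uS iln ui ai unfolding S_def by auto
    have "card (insert i S) \<le> card {j. j < n \<and> a j + u j \<noteq> 0}"
      by (rule card_mono[OF _ sub2]) simp
    also have "\<dots> = k" using w uV unfolding weight_def by simp
    finally show False using iS finS cS by simp
  qed
  have "card V \<le> card (S \<rightarrow>\<^sub>E (UNIV::bit set))"
    by (rule card_inj_on_le[OF inj]) (auto intro!: finite_PiE simp: finS bit_univ)
  thus ?thesis using card_restr[OF finS] cS by simp
qed

lemma key2:
  assumes sub: "gf2_subspace n V" and a: "a \<in> gf2vec n"
    and w: "\<forall>v\<in>V. weight n (\<lambda>i. a i + v i) = k"
  shows "card V \<le> 2 ^ (n - k)"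
proof -
  define S where "S = {i. i < n \<and> a i \<noteq> 0}"
  define T where "T = {i. i < n \<and> a i = 0}"
  have finS: "finite S" unfolding S_def by simp
  have finT: "finite T" unfolding T_def by simp
  have "(\<lambda>_. 0) \<in> V" using sub unfolding gf2_subspace_def by blast
  hence cS: "card S = k" using w unfolding S_def weight_def by force
  have "S \<union> T = {..<n}" "S \<inter> T = {}" unfolding S_def T_def by auto
  hence "card S + card T = n" using finS finT card_Un_disjoint by (metis card_lessThan)
  hence cT: "card T = n - k" using cS by simp
  have inj: "inj_on (\<lambda>v. restrict v T) V"
  proof (rule inj_onI, rule ccontr)
    fix v w' assume v: "v \<in> V" and wV: "w' \<in> V" and eq: "restrict v T = restrict w' T" and ne: "v \<noteq> w'"
    define u where "u = (\<lambda>i. v i + w' i)"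
    have uV: "u \<in> V" using sub v wV unfolding gf2_subspace_def u_def by blast
    from ne obtain i where i: "v i \<noteq> w' i" by blast
    have "v \<in> gf2vec n" "w' \<in> gf2vec n" using sub v wV unfolding gf2_subspace_def by blast+
    hence iln: "i < n" using i unfolding gf2vec_def by (metis (mono_tags, lifting) mem_Collect_eq not_le)
    have uT: "\<forall>j\<in>T. u j = 0" using eq unfolding u_def restrict_def
      by (metis bit_add_eq0)
    have iT: "i \<notin> T" using eq i unfolding restrict_def by metis
    have ui: "u i \<noteq> 0" using i unfolding u_def bit_add_eq0 .
    have ai: "a i \<noteq> 0" using iT iln unfolding T_def by simp
    have aui: "a i + u i = 0" using ai ui by (simp add: bit_add_eq0)
    have sub2: "{j. j < n \<and> a j + u j \<noteq> 0} \<subseteq> S - {i}"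
    proof
      fix j assume j: "j \<in> {j. j < n \<and> a j + u j \<noteq> 0}"
      have "a j \<noteq> 0"
      proof
        assume "a j = 0" hence "j \<in> T" using j unfolding T_def by simp
        thus False using uT j \<open>a j = 0\<close> by simp
      qed
      thus "j \<in> S - {i}" using j aui unfolding S_def by auto
    qed
    have iS: "i \<in> S" using iln ai unfolding S_def by simp
    have "k = card {j. j < n \<and> a j + u j \<noteq> 0}" using w uV unfolding weight_def by simp
    also have "\<dots> \<le> card (S - {i})" by (rule card_mono[OF _ sub2]) (simp add: finS)
    also have "\<dots> < card S" by (rule card_Diff1_less[OF finS iS])
    finally show False using cS by simp
  qed
  have "card V \<le> card (T \<rightarrow>\<^sub>E (UNIV::bit set))"
    by (rule card_inj_on_le[OF inj]) (auto intro!: finite_PiE simp: finT bit_univ)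
  thus ?thesis using card_restr[OF finT] cT by simp
qed

theorem corollary5:
  fixes n k :: nat and C :: "(nat \<Rightarrow> bit) set"
  assumes "gf2_affine n C"
    and "\<forall>x\<in>C. weight n x = k"
  shows "real (card C) \<le> 2 powr ((real n - \<bar>real n - 2 * real k\<bar>) / 2)"
proof -
  obtain a V where a: "a \<in> gf2vec n" and sub: "gf2_subspace n V"
    and C: "C = (\<lambda>v. (\<lambda>i. a i + v i)) ` V"
    using assms(1) unfolding gf2_affine_def by blast
  have w: "\<forall>v\<in>V. weight n (\<lambda>i. a i + v i) = k" using assms(2) C by blast
  have injt: "inj_on (\<lambda>v. (\<lambda>i. a i + v i)) V"
  proof (rule inj_onI)
    fix x y assume "(\<lambda>i. a i + x i) = (\<lambda>i. a i + y i)"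
    hence "\<And>i. a i + x i = a i + y i" by metis
    hence "\<And>i. x i = y i" by (metis bit_cancel)
    thus "x = y" by (simp add: fun_eq_iff)
  qed
  have cC: "card C = card V" using C card_image[OF injt] by simp
  have "(\<lambda>_. 0) \<in> V" using sub unfolding gf2_subspace_def by blast
  hence "weight n (\<lambda>i. a i + 0) = k" using w by fastforce
  hence "k = weight n a" by (simp only: add_0_right)
  hence kn: "k \<le> n" unfolding weight_def
    by (metis (no_types, lifting) card_lessThan card_mono finite_lessThan lessThan_iff mem_Collect_eq subsetI)
  have m: "(real n - \<bar>real n - 2 * real k\<bar>) / 2 = real (min k (n - k))"
    using kn by (auto simp: of_nat_diff)
  have "card V \<le> 2 ^ min k (n - k)"
    using key1[OF sub a w] key2[OF sub a w] by (simp add: min_def)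
  hence "real (card V) \<le> real (2 ^ min k (n - k))" by (simp only: of_nat_le_iff)
  hence "real (card C) \<le> 2 ^ min k (n - k)" using cC by simp
  also have "\<dots> = 2 powr real (min k (n - k))" by (simp add: powr_realpow)
  finally show ?thesis using m by simp
qed

end
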